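(* Let $N\ge2$, $\Omega=\mathbb{R}^{N-1}\times(0,\infty)$, $(\phi,\psi)\in BC(\Omega)\times L^\infty(\partial\Omega)$, and fix $\delta>0$, $k>0$. For $\epsilon>0$ and $\kappa\in\{k,0\}$ let $u^\epsilon_\kappa$ be the solution defined in the context. Then for every compact $K\subset\Omega$ and $T>0$, \[\lim_{\epsilon\to\infty}\sup_{(x,t)\in K\times(0,T)}|u^\epsilon_k(x,t)-\phi(x)|=0,\qquad\lim_{\epsilon\to\infty}\sup_{(x,t)\in K\times(0,T)}|u^\epsilon_0(x,t)-\phi(x)|=0.\]
   Context: $x=(x',x_N)$, $\partial\Omega\cong\mathbb{R}^{N-1}$ with surface measure $d\sigma$. $\Gamma_d(x,t)=(4\pi t)^{-d/2}e^{-|x|^2/(4t)}$, $\partial_\xi\Gamma_1$ the spatial derivative of $\Gamma_1$, $y^*=(y',-y_N)$, $G_0(x,y,s)=\Gamma_N(x-y,s)-\Gamma_N(x-y^*,s)$. For $\kappa\ge0$: $H(x,y,t)=-2\int_0^t\Gamma_{N-1}(x'-y',\frac{t-\tau}\epsilon+\frac\kappa\delta\tau)\partial_\xi\Gamma_1(x_N+y_N+\frac\tau\delta,\frac{t-\tau}\epsilon)d\tau$, $G=G_0(x,y,t/\epsilon)+\delta^{-1}H$, and $u^\epsilon_\kappa(x,t)=\int_\Omega G(x,y,t)\phi(y)dy+\frac\delta\epsilon\int_{\partial\Omega}G(x,y,t)\psi(y)d\sigma(y)$ is the solution of $\epsilon\partial_tu=\Delta u$ in $\Omega$, $\delta\partial_tu-\kappa\Delta'u-\partial_{x_N}u=0$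 on $\partial\Omega$ ($\Delta'$ the Laplacian in $x'$), with initial data $\phi$ in $\Omega$ and $\psi$ on $\partial\Omega$. *)

theory Defs
  imports "HOL-Analysis.Analysis"
begin

text \<open>Points of R^N are pairs (x', x_N) with x' :: real^'n, so N - 1 = CARD('n) \<ge> 1.\<close>

definition half_space :: "((real^'n) \<times> real) set" where
  "half_space = UNIV \<times> {0<..}"

definition heat :: "real \<Rightarrow> real \<Rightarrow> real \<Rightarrow> real" where
  "heat d r t = (4 * pi * t) powr (- d / 2) * exp (- (r\<^sup>2) / (4 * t))"

definition dheat1 :: "real \<Rightarrow> real \<Rightarrow> real" where
  "dheat1 \<xi> s = deriv (\<lambda>z. heat 1 \<bar>z\<bar> s) \<xi>"

definition refl_pt :: "(real^'n) \<times> real \<Rightarrow> (real^'n) \<times> real" where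
  "refl_pt y = (fst y, - snd y)"

definition G0 :: "(real^'n) \<times> real \<Rightarrow> (real^'n) \<times> real \<Rightarrow> real \<Rightarrow> real" where
  "G0 x y s = heat (real CARD('n) + 1) (norm (x - y)) s
            - heat (real CARD('n) + 1) (norm (x - refl_pt y)) s"

definition Hker :: "real \<Rightarrow> real \<Rightarrow> real \<Rightarrow> (real^'n) \<times> real \<Rightarrow> (real^'n) \<times> real \<Rightarrow> real \<Rightarrow> real" where
  "Hker eps kap del x y t = - 2 * (LBINT \<tau>=0..t.
      heat (real CARD('n)) (norm (fst x - fst y)) ((t - \<tau>) / eps + kap / del * \<tau>)
      * dheat1 (snd x + snd y + \<tau> / del) ((t - \<tau>) / eps))"

definition Gker :: "real \<Rightarrow> real \<Rightarrow> real \<Rightarrow> (real^'n) \<times> real \<Rightarrow> (real^'n) \<times> real \<Rightarrow> real \<Rightarrow> real" where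
  "Gker eps kap del x y t = G0 x y (t / eps) + Hker eps kap del x y t / del"

text \<open>The solution u^eps_kappa; the boundary is identified with R^(N-1) via y' \<mapsto> (y',0).\<close>
definition usol :: "real \<Rightarrow> real \<Rightarrow> real \<Rightarrow> ((real^'n) \<times> real \<Rightarrow> real) \<Rightarrow> (real^'n \<Rightarrow> real)
      \<Rightarrow> (real^'n) \<times> real \<Rightarrow> real \<Rightarrow> real" where
  "usol eps kap del \<phi> \<psi> x t =
     (LINT y : half_space | lborel. Gker eps kap del x y t * \<phi> y)
     + del / eps * (LINT y' | lborel. Gker eps kap del x (y', 0) t * \<psi> y')"

end

theory Submission
  imports Defs "HOL-Probability.Distributions" "HOL-Real_Asymp.Real_Asymp"
begin


lemma heat_prod:
  fixes \<mu> z :: "'a::euclidean_space"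
  assumes s: "s > 0"
  shows "heat DIM('a) (norm (z - \<mu>)) s = (\<Prod>b\<in>Basis. normal_density (\<mu> \<bullet> b) (sqrt (2 * s)) (z \<bullet> b))"
proof -
  have n2: "(norm (z - \<mu>))\<^sup>2 = (\<Sum>b\<in>Basis. (z \<bullet> b - \<mu> \<bullet> b)\<^sup>2)"
    unfolding power2_norm_eq_inner euclidean_inner[of "z-\<mu>" "z-\<mu>"]
    by (simp add: inner_diff_left power2_eq_square)
  have "(\<Prod>b\<in>Basis. normal_density (\<mu> \<bullet> b) (sqrt (2 * s)) (z \<bullet> b))
      = (\<Prod>b\<in>Basis. (1 / sqrt (4*pi * s)) * exp (- (z \<bullet> b - \<mu> \<bullet> b)\<^sup>2 / (4 * s)))"
    using s by (intro prod.cong) (auto simp: normal_density_def power2_eq_square)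
  also have "\<dots> = (1 / sqrt (4*pi * s)) ^ DIM('a) * (\<Prod>b\<in>Basis. exp (- (z \<bullet> b - \<mu> \<bullet> b)\<^sup>2 / (4 * s)))"
    unfolding prod.distrib by simp
  also have "(\<Prod>b\<in>Basis. exp (- (z \<bullet> b - \<mu> \<bullet> b)\<^sup>2 / (4 * s))) = exp (- (norm (z - \<mu>))\<^sup>2 / (4 * s))"
    unfolding n2 by (simp add: sum_divide_distrib sum_negf[symmetric] exp_sum)
  also have "(1 / sqrt (4*pi * s)) ^ DIM('a) = (4*pi * s) powr (- real DIM('a) / 2)"
  proof -
    have x: "4*pi * s > 0" using s by simp
    have "1 / sqrt (4*pi * s) = (4*pi * s) powr (- (1/2))"
      using x by (simp add: powr_minus_divide powr_half_sqrt)
    then show ?thesis using x by (simp only: powr_power) (simp add: field_simps)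
  qed
  finally show ?thesis by (simp add: heat_def)
qed

lemma heat_nonneg: "0 \<le> heat d r s"
  unfolding heat_def by (intro mult_nonneg_nonneg) auto

lemma heat_pos: "s > 0 \<Longrightarrow> 0 < heat d r s"
  unfolding heat_def by (intro mult_pos_pos) auto

lemma heat_measurable[measurable]: "(\<lambda>z. heat d (f z) (g z)) \<in> borel_measurable M"
  if [measurable]: "f \<in> borel_measurable M" "g \<in> borel_measurable M"
  unfolding heat_def by measurable

lemma gauss_nn:
  fixes \<mu> :: "'a::euclidean_space"
  assumes s: "s > 0"
  shows "(\<integral>\<^sup>+z. ennreal (heat DIM('a) (norm (z - \<mu>)) s) \<partial>lborel) = 1"
proof -
  have "(\<integral>\<^sup>+z. ennreal (heat DIM('a) (norm (z - \<mu>)) s) \<partial>lborel)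
     = (\<integral>\<^sup>+z. (\<Prod>b\<in>Basis. ennreal (normal_density (\<mu> \<bullet> b) (sqrt (2 * s)) (z \<bullet> b))) \<partial>lborel)"
    using s by (simp add: heat_prod prod_ennreal)
  also have "\<dots> = (\<Prod>b\<in>(Basis::'a set). (\<integral>\<^sup>+x. ennreal (normal_density (\<mu> \<bullet> b) (sqrt (2 * s)) x) \<partial>lborel))"
    by (rule nn_integral_lborel_prod) auto
  also have "\<dots> = (\<Prod>b\<in>(Basis::'a set). 1)"
    using s by (intro prod.cong refl) (simp add: nn_integral_eq_integral)
  finally show ?thesis by simp
qed

lemma gauss_int:
  fixes \<mu> :: "'a::euclidean_space"
  assumes s: "s > 0"
  shows "integrable lborel (\<lambda>z. heat DIM('a) (norm (z - \<mu>)) s)"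
    and "(\<integral>z. heat DIM('a) (norm (z - \<mu>)) s \<partial>lborel) = 1"
proof -
  show "integrable lborel (\<lambda>z. heat DIM('a) (norm (z - \<mu>)) s)"
    by (rule integrableI_nn_integral_finite[where x=1]) (use s gauss_nn heat_nonneg in auto)
  show "(\<integral>z. heat DIM('a) (norm (z - \<mu>)) s \<partial>lborel) = 1"
    by (subst integral_eq_nn_integral) (use s gauss_nn heat_nonneg in auto)
qed


definition Dexp :: "real \<Rightarrow> real \<Rightarrow> real" where
  "Dexp \<xi> s = - \<xi> / (2 * s) * heat 1 \<bar>\<xi>\<bar> s"

lemma heat_abs[simp]: "heat d \<bar>r\<bar> s = heat d r s"
  by (simp add: heat_def)

lemma heat1_eq: "s > 0 \<Longrightarrow> heat 1 r s = exp (- r\<^sup>2 / (4 * s)) / sqrt (4 * pi * s)"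
  by (simp add: heat_def powr_minus_divide powr_half_sqrt)

lemma Dexp_measurable[measurable]: "(\<lambda>z. Dexp (f z) (g z)) \<in> borel_measurable M"
  if [measurable]: "f \<in> borel_measurable M" "g \<in> borel_measurable M"
  unfolding Dexp_def by measurable

lemma deriv_gauss_shift:
  fixes s c a :: real
  assumes "s \<noteq> 0"
  shows "((\<lambda>z. exp (- (a + z)\<^sup>2 / (4 * s)) / c) has_real_derivative
        exp (- (a + \<xi>)\<^sup>2 / (4 * s)) * (- (2 * (a + \<xi>)) / (4 * s)) / c) (at \<xi>)"
proof -
  have "((\<lambda>z. - (a + z)\<^sup>2 / (4 * s)) has_real_derivative - (2 * (a + \<xi>)) / (4 * s)) (at \<xi>)"
    using assms by (auto intro!: derivative_eq_intros simp: field_simps)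
  then show ?thesis by (rule DERIV_cdivide[OF DERIV_fun_exp])
qed

lemma deriv_gauss:
  fixes s c :: real
  assumes "s \<noteq> 0"
  shows "((\<lambda>z. exp (- z\<^sup>2 / (4 * s)) / c) has_real_derivative
        exp (- \<xi>\<^sup>2 / (4 * s)) * (- (2 * \<xi>) / (4 * s)) / c) (at \<xi>)"
  using deriv_gauss_shift[OF assms, of 0 c \<xi>] by simp

lemma dheat1_eq:
  assumes s: "s > 0"
  shows "dheat1 \<xi> s = Dexp \<xi> s"
proof -
  have e: "(\<lambda>z. heat 1 \<bar>z\<bar> s) = (\<lambda>z. exp (- z\<^sup>2 / (4 * s)) / sqrt (4 * pi * s))"
    using s by (simp add: heat1_eq)
  have "((\<lambda>z. exp (- z\<^sup>2 / (4 * s)) / sqrt (4 * pi * s)) has_real_derivative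
        exp (- \<xi>\<^sup>2 / (4 * s)) * (- (2 * \<xi>) / (4 * s)) / sqrt (4 * pi * s)) (at \<xi>)"
    by (rule deriv_gauss) (use s in simp)
  then have "dheat1 \<xi> s = exp (- \<xi>\<^sup>2 / (4 * s)) * (- (2 * \<xi>) / (4 * s)) / sqrt (4 * pi * s)"
    unfolding dheat1_def e by (rule DERIV_imp_deriv)
  also have "\<dots> = Dexp \<xi> s"
  proof -
    have q: "sqrt (4 * pi * s) > 0" using s by simp
    show ?thesis unfolding Dexp_def heat_abs heat1_eq[OF s] using q s
      by (simp add: field_simps)
  qed
  finally show ?thesis .
qed

lemma exp_neg_le_inv: "(w::real) > 0 \<Longrightarrow> exp (- w) \<le> 1 / w"
proof -
  assume w: "w > 0"
  have "w \<le> exp w" using exp_ge_add_one_self[of w] by linarith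
  then show ?thesis using w by (simp add: exp_minus field_simps)
qed

lemma exp_neg_le_inv2: "(w::real) > 0 \<Longrightarrow> exp (- w) \<le> 4 / w\<^sup>2"
proof -
  assume w: "w > 0"
  have "w / 2 \<le> exp (w / 2)" using exp_ge_add_one_self[of "w/2"] by linarith
  then have "(w/2)\<^sup>2 \<le> (exp (w/2))\<^sup>2" using w by (intro power_mono) auto
  also have "(exp (w/2))\<^sup>2 = exp w" by (simp add: power2_eq_square flip: exp_add)
  finally have "w\<^sup>2 / 4 \<le> exp w" by (simp add: power_divide)
  then show ?thesis using w by (simp add: exp_minus field_simps)
qed

lemma sqrt4pi_ge: "sqrt (4 * pi * s) \<ge> sqrt s"
  if "s \<ge> 0" for s :: real
proof -
  have "1 * s \<le> (4 * pi) * s" using that pi_gt3 by (intro mult_right_mono) auto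
  then show ?thesis by (intro real_sqrt_le_mono) simp
qed

lemma heat1_bound:
  assumes s: "s > 0" and a: "a > 0"
  shows "heat 1 a s \<le> 4 * sqrt s / a\<^sup>2"
proof -
  have "exp (- a\<^sup>2 / (4 * s)) \<le> 1 / (a\<^sup>2 / (4 * s))"
    using exp_neg_le_inv[of "a\<^sup>2 / (4 * s)"] s a by simp
  then have e: "exp (- a\<^sup>2 / (4 * s)) \<le> 4 * s / a\<^sup>2" by simp
  have "heat 1 a s = exp (- a\<^sup>2 / (4 * s)) / sqrt (4 * pi * s)"
    using s by (simp add: heat1_eq)
  also have "\<dots> \<le> (4 * s / a\<^sup>2) / sqrt (4 * pi * s)"
    using e by (rule divide_right_mono) (use s in simp)
  also have "\<dots> \<le> (4 * s / a\<^sup>2) / sqrt s"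
    using s a sqrt4pi_ge[of s] pi_gt_zero by (intro divide_left_mono) (auto intro!: mult_pos_pos mult_nonneg_nonneg)
  also have "\<dots> = 4 * sqrt s / a\<^sup>2"
    using s a by (simp add: field_simps)
  finally show ?thesis .
qed

lemma Dexp_bound:
  assumes s: "s > 0" and a: "\<xi> > 0"
  shows "\<bar>Dexp \<xi> s\<bar> \<le> 64 * sqrt s / \<xi>^3"
proof -
  have w: "\<xi>\<^sup>2 / (4 * s) > 0" using s a by simp
  have "exp (- \<xi>\<^sup>2 / (4 * s)) \<le> 4 / (\<xi>\<^sup>2 / (4 * s))\<^sup>2"
    using exp_neg_le_inv2[OF w] by simp
  also have "\<dots> = 64 * s\<^sup>2 / \<xi>^4" using s a by (simp add: field_simps power2_eq_square eval_nat_numeral)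
  finally have e: "exp (- \<xi>\<^sup>2 / (4 * s)) \<le> 64 * s\<^sup>2 / \<xi>^4" .
  have "\<bar>Dexp \<xi> s\<bar> = \<xi> / (2 * s) * (exp (- \<xi>\<^sup>2 / (4 * s)) / sqrt (4 * pi * s))"
    using s a by (simp add: Dexp_def heat1_eq abs_mult)
  also have "\<dots> \<le> \<xi> / (2 * s) * ((64 * s\<^sup>2 / \<xi>^4) / sqrt s)"
    using s a e sqrt4pi_ge[of s]
    by (intro mult_left_mono frac_le) auto
  also have "\<dots> = 32 * (s / sqrt s) / \<xi>^3"
    using s a by (simp add: field_simps power2_eq_square power3_eq_cube power4_eq_xxxx)
  also have "s / sqrt s = sqrt s"
    using s by (metis real_div_sqrt less_imp_le)
  finally show ?thesis using s a by simp
qed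

lemma tail_nn:
  assumes s: "s > 0" and a: "a > 0"
  shows "(\<integral>\<^sup>+y. ennreal \<bar>Dexp (a + y) s\<bar> * indicator {0..} y \<partial>lborel) = ennreal (heat 1 a s)"
proof -
  let ?f = "\<lambda>y. (a + y) / (2 * s) * heat 1 (a + y) s"
  let ?F = "\<lambda>y. - heat 1 (a + y) s"
  have "(\<integral>\<^sup>+y. ennreal \<bar>Dexp (a + y) s\<bar> * indicator {0..} y \<partial>lborel)
      = (\<integral>\<^sup>+y. ennreal (?f y) * indicator {0..} y \<partial>lborel)"
    using s a by (intro nn_integral_cong) (auto simp: Dexp_def abs_mult heat_nonneg split: split_indicator)
  also have "\<dots> = 0 - ?F 0"
  proof (rule nn_integral_FTC_atLeast)
    show "?f \<in> borel_measurable borel" by measurable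
    show "DERIV ?F y :> ?f y" if "0 \<le> y" for y
    proof -
      define q where "q = sqrt (4 * pi * s)"
      have q: "q > 0" using s by (simp add: q_def)
      have "((\<lambda>y. exp (- (a + y)\<^sup>2 / (4 * s)) / q) has_real_derivative
        exp (- (a + y)\<^sup>2 / (4 * s)) * (- (2 * (a + y)) / (4 * s)) / q) (at y)"
        by (rule deriv_gauss_shift) (use s in simp)
      then have D: "((\<lambda>y. - (exp (- (a + y)\<^sup>2 / (4 * s)) / q)) has_real_derivative
        - (exp (- (a + y)\<^sup>2 / (4 * s)) * (- (2 * (a + y)) / (4 * s)) / q)) (at y)"
        by (rule DERIV_minus)
      have F: "?F = (\<lambda>y. - (exp (- (a + y)\<^sup>2 / (4 * s)) / q))"
        using s by (simp add: heat1_eq q_def)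
      have V: "- (exp (- (a + y)\<^sup>2 / (4 * s)) * (- (2 * (a + y)) / (4 * s)) / q) = ?f y"
        using q s unfolding heat1_eq[OF s] q_def[symmetric] by (simp add: field_simps)
      show ?thesis using D unfolding F V .
    qed
    show "0 \<le> ?f y" if "0 \<le> y" for y using that s a heat_nonneg by simp
    have "((\<lambda>y. - (exp (- (a + y)\<^sup>2 / (4 * s)) / sqrt (4 * pi * s))) \<longlongrightarrow> 0) at_top"
      using s by real_asymp
    then show "(?F \<longlongrightarrow> 0) at_top" using s by (simp add: heat1_eq)
  qed
  finally show ?thesis by simp
qed


definition Hint :: "real \<Rightarrow> real \<Rightarrow> real \<Rightarrow> (real^'n) \<times> real \<Rightarrow> (real^'n) \<times> real \<Rightarrow> real \<Rightarrow> real \<Rightarrow> real" where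
  "Hint eps kap del x y t \<tau> = heat (real CARD('n)) (norm (fst x - fst y)) ((t - \<tau>) / eps + kap / del * \<tau>)
      * Dexp (snd x + snd y + \<tau> / del) ((t - \<tau>) / eps)"

lemma bm_fst[measurable (raw)]:
  fixes f :: "'a \<Rightarrow> 'b::euclidean_space \<times> 'c::euclidean_space"
  shows "f \<in> borel_measurable M \<Longrightarrow> (\<lambda>x. fst (f x)) \<in> borel_measurable M"
  by (erule measurable_compose, intro borel_measurable_continuous_onI continuous_intros)

lemma bm_snd[measurable (raw)]:
  fixes f :: "'a \<Rightarrow> 'b::euclidean_space \<times> 'c::euclidean_space"
  shows "f \<in> borel_measurable M \<Longrightarrow> (\<lambda>x. snd (f x)) \<in> borel_measurable M"
  by (erule measurable_compose, intro borel_measurable_continuous_onI continuous_intros)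

lemma Hint_meas[measurable (raw)]:
  "(\<lambda>p. Hint eps kap del x (f p) t (g p)) \<in> borel_measurable M"
  if [measurable]: "f \<in> borel_measurable M" "g \<in> borel_measurable M"
  for f :: "_ \<Rightarrow> (real^'n) \<times> real"
  unfolding Hint_def by measurable

lemma half_space_borel[measurable]: "half_space \<in> sets borel"
  unfolding half_space_def by (intro borel_open open_Times) auto

lemma Hker_eq:
  fixes x y :: "(real^'n) \<times> real"
  assumes eps: "eps > 0" and t: "t \<ge> 0"
  shows "Hker eps kap del x y t = -2 * (\<integral>\<tau>. indicator {0<..<t} \<tau> * Hint eps kap del x y t \<tau> \<partial>lborel)"
proof -
  have "(LBINT \<tau>=0..t. heat (real CARD('n)) (norm (fst x - fst y)) ((t - \<tau>) / eps + kap / del * \<tau>)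
      * dheat1 (snd x + snd y + \<tau> / del) ((t - \<tau>) / eps))
    = (\<integral>\<tau>. indicator {0<..<t} \<tau> * Hint eps kap del x y t \<tau> \<partial>lborel)"
    unfolding interval_lebesgue_integral_def set_lebesgue_integral_def using t
    by (auto intro!: Bochner_Integration.integral_cong simp: Hint_def dheat1_eq eps einterval_iff split: split_indicator)
  then show ?thesis unfolding Hker_def by simp
qed

lemma norm_int_le_nn:
  fixes f :: "'a \<Rightarrow> real"
  shows "ennreal (norm (integral\<^sup>L M f)) \<le> (\<integral>\<^sup>+x. ennreal (norm (f x)) \<partial>M)"
proof (cases "integrable M f")
  case True then show ?thesis by (rule integral_norm_bound_ennreal)
next
  case False then show ?thesis by (simp add: not_integrable_integral_eq)
qed

lemma H_pt_bound:
  assumes eps: "eps > 0" and t: "t \<ge> 0"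
  shows "ennreal \<bar>Hker eps kap del x y t\<bar> \<le>
     2 * (\<integral>\<^sup>+\<tau>. ennreal (indicator {0<..<t} \<tau> * \<bar>Hint eps kap del x y t \<tau>\<bar>) \<partial>lborel)"
proof -
  have "ennreal \<bar>Hker eps kap del x y t\<bar> = 2 * ennreal (norm (\<integral>\<tau>. indicator {0<..<t} \<tau> * Hint eps kap del x y t \<tau> \<partial>lborel))"
    unfolding Hker_eq[OF eps t] by (simp add: abs_mult ennreal_mult)
  also have "\<dots> \<le> 2 * (\<integral>\<^sup>+\<tau>. ennreal (norm (indicator {0<..<t} \<tau> * Hint eps kap del x y t \<tau>)) \<partial>lborel)"
    by (intro mult_left_mono norm_int_le_nn) auto
  also have "\<dots> = 2 * (\<integral>\<^sup>+\<tau>. ennreal (indicator {0<..<t} \<tau> * \<bar>Hint eps kap del x y t \<tau>\<bar>) \<partial>lborel)"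
    by (intro arg_cong2[where f="(*)"] refl nn_integral_cong) (auto simp: abs_mult split: split_indicator)
  finally show ?thesis .
qed

lemma Hker_meas:
  assumes eps: "eps > 0" and t: "t \<ge> 0"
  shows "(\<lambda>y. Hker eps kap del x y t) \<in> borel_measurable lborel"
proof -
  have "(\<lambda>y. Hker eps kap del x y t) = (\<lambda>y. -2 * (\<integral>\<tau>. indicator {0<..<t} \<tau> * Hint eps kap del x y t \<tau> \<partial>lborel))"
    unfolding Hker_eq[OF eps t] by simp
  also have "\<dots> \<in> borel_measurable lborel"
  proof -
    have "(\<lambda>(y, \<tau>). indicator {0<..<t} \<tau> * Hint eps kap del x y t \<tau>) \<in> borel_measurable (lborel \<Otimes>\<^sub>M lborel)"
      unfolding lborel_prod by measurable
    then have "(\<lambda>y. (\<integral>\<tau>. indicator {0<..<t} \<tau> * Hint eps kap del x y t \<tau> \<partial>lborel)) \<in> borel_measurable lborel"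
      by (rule lborel.borel_measurable_lebesgue_integral[of "\<lambda>y \<tau>. indicator {0<..<t} \<tau> * Hint eps kap del x y t \<tau>"])
    then show ?thesis by measurable
  qed
  finally show ?thesis .
qed


lemma gauss_nn_vec:
  fixes \<mu> :: "real^'n"
  assumes "s > 0"
  shows "(\<integral>\<^sup>+z. ennreal (heat (real CARD('n)) (norm (z - \<mu>)) s) \<partial>lborel) = 1"
  using gauss_nn[OF assms, of \<mu>] by simp

lemma half_space_ind: "indicator half_space (a, b) = (indicator {0<..} b :: real)"
  by (simp add: half_space_def indicator_def)

lemma nn_split_pair:
  fixes g :: "(real^'n) \<times> real \<Rightarrow> ennreal"
  assumes [measurable]: "g \<in> borel_measurable borel"
  shows "(\<integral>\<^sup>+y. g y \<partial>lborel) = (\<integral>\<^sup>+a. (\<integral>\<^sup>+b. g (a, b) \<partial>lborel) \<partial>lborel)"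
proof -
  have "(\<integral>\<^sup>+y. g y \<partial>lborel) = (\<integral>\<^sup>+y. g y \<partial>(lborel \<Otimes>\<^sub>M lborel))"
    by (simp only: lborel_prod)
  also have "\<dots> = (\<integral>\<^sup>+a. (\<integral>\<^sup>+b. g (a, b) \<partial>lborel) \<partial>lborel)"
    by (rule lborel.nn_integral_fst[symmetric]) (simp only: lborel_prod measurable_lborel2 assms)
  finally show ?thesis .
qed

lemma inner_B:
  fixes x :: "(real^'n) \<times> real"
  assumes eps: "eps > 0" and kap: "kap \<ge> 0" and del: "del > 0" and tau: "0 < \<tau>" "\<tau> < t"
    and c: "c > 0" "snd x \<ge> c"
  shows "(\<integral>\<^sup>+y. ennreal (indicator half_space y * \<bar>Hint eps kap del x y t \<tau>\<bar>) \<partial>lborel)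
         \<le> ennreal (4 * sqrt (t / eps) / c\<^sup>2)"
proof -
  define s where "s = (t - \<tau>) / eps"
  define \<sigma> where "\<sigma> = (t - \<tau>) / eps + kap / del * \<tau>"
  define a where "a = snd x + \<tau> / del"
  have s: "s > 0" using eps tau by (simp add: s_def)
  have \<sigma>: "\<sigma> > 0" using eps tau kap del unfolding \<sigma>_def
    by (intro add_pos_nonneg) (auto intro!: mult_nonneg_nonneg)
  have "\<tau> / del > 0" using tau del by simp
  then have a: "a \<ge> c" using c by (simp add: a_def)
  have "(\<integral>\<^sup>+y. ennreal (indicator half_space y * \<bar>Hint eps kap del x y t \<tau>\<bar>) \<partial>lborel)
     = (\<integral>\<^sup>+y'. (\<integral>\<^sup>+yN. ennreal (indicator half_space (y', yN) * \<bar>Hint eps kap del x (y', yN) t \<tau>\<bar>) \<partial>lborel) \<partial>lborel)"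
    by (rule nn_split_pair) measurable
  also have "\<dots> = (\<integral>\<^sup>+y'. ennreal (heat (real CARD('n)) (norm (y' - fst x)) \<sigma>) *
        (\<integral>\<^sup>+yN. ennreal \<bar>Dexp (a + yN) s\<bar> * indicator {0<..} yN \<partial>lborel) \<partial>lborel)"
  proof (intro nn_integral_cong)
    fix y' :: "real^'n"
    have "(\<integral>\<^sup>+yN. ennreal (indicator half_space (y', yN) * \<bar>Hint eps kap del x (y', yN) t \<tau>\<bar>) \<partial>lborel)
       = (\<integral>\<^sup>+yN. ennreal (heat (real CARD('n)) (norm (y' - fst x)) \<sigma>) * (ennreal \<bar>Dexp (a + yN) s\<bar> * indicator {0<..} yN) \<partial>lborel)"
      by (intro nn_integral_cong)
         (auto simp: half_space_ind Hint_def abs_mult heat_nonneg norm_minus_commute ennreal_mult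
            s_def \<sigma>_def a_def ac_simps split: split_indicator)
    also have "\<dots> = ennreal (heat (real CARD('n)) (norm (y' - fst x)) \<sigma>) *
        (\<integral>\<^sup>+yN. ennreal \<bar>Dexp (a + yN) s\<bar> * indicator {0<..} yN \<partial>lborel)"
      by (rule nn_integral_cmult) measurable
    finally show "(\<integral>\<^sup>+yN. ennreal (indicator half_space (y', yN) * \<bar>Hint eps kap del x (y', yN) t \<tau>\<bar>) \<partial>lborel)
       = ennreal (heat (real CARD('n)) (norm (y' - fst x)) \<sigma>) *
        (\<integral>\<^sup>+yN. ennreal \<bar>Dexp (a + yN) s\<bar> * indicator {0<..} yN \<partial>lborel)" .
  qed
  also have "\<dots> \<le> (\<integral>\<^sup>+y'. ennreal (heat (real CARD('n)) (norm (y' - fst x)) \<sigma>) * ennreal (heat 1 a s) \<partial>lborel)"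
  proof (intro nn_integral_mono mult_left_mono)
    have "(\<integral>\<^sup>+yN. ennreal \<bar>Dexp (a + yN) s\<bar> * indicator {0<..} yN \<partial>lborel)
        \<le> (\<integral>\<^sup>+yN. ennreal \<bar>Dexp (a + yN) s\<bar> * indicator {0..} yN \<partial>lborel)"
      by (intro nn_integral_mono) (auto split: split_indicator)
    also have "\<dots> = ennreal (heat 1 a s)"
      using c a s by (intro tail_nn) auto
    finally show "(\<integral>\<^sup>+yN. ennreal \<bar>Dexp (a + yN) s\<bar> * indicator {0<..} yN \<partial>lborel) \<le> ennreal (heat 1 a s)" .
  qed auto
  also have "\<dots> = (\<integral>\<^sup>+y'. ennreal (heat (real CARD('n)) (norm (y' - fst x)) \<sigma>) \<partial>lborel) * ennreal (heat 1 a s)"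
    by (rule nn_integral_multc) measurable
  also have "\<dots> = ennreal (heat 1 a s)"
    using gauss_nn_vec[OF \<sigma>, of "fst x"] by simp
  also have "\<dots> \<le> ennreal (4 * sqrt (t / eps) / c\<^sup>2)"
  proof (intro ennreal_leI)
    have "heat 1 a s \<le> 4 * sqrt s / a\<^sup>2" using heat1_bound[OF s, of a] a c by simp
    also have "\<dots> \<le> 4 * sqrt (t / eps) / c\<^sup>2"
    proof (intro frac_le mult_left_mono real_sqrt_le_mono power_mono)
      show "s \<le> t / eps" using tau eps by (simp add: s_def divide_right_mono)
    qed (use c a tau eps in auto)
    finally show "heat 1 a s \<le> 4 * sqrt (t / eps) / c\<^sup>2" .
  qed
  finally show ?thesis .
qed


lemma ennreal_2mult:
  fixes B t :: real
  assumes "B \<ge> 0" "t \<ge> 0"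
  shows "2 * (ennreal B * ennreal t) = ennreal (2 * B * t)"
proof -
  have "ennreal (2 * B * t) = ennreal (2 * B) * ennreal t" using assms by (intro ennreal_mult) auto
  also have "ennreal (2 * B) = ennreal 2 * ennreal B" using assms by (intro ennreal_mult) auto
  finally show ?thesis by (simp add: mult.assoc)
qed

lemma HB_bound:
  fixes x :: "(real^'n) \<times> real"
  assumes eps: "eps > 0" and kap: "kap \<ge> 0" and del: "del > 0" and t: "t > 0"
    and c: "c > 0" "snd x \<ge> c"
  shows "(\<integral>\<^sup>+y. ennreal (indicator half_space y * \<bar>Hker eps kap del x y t\<bar>) \<partial>lborel)
         \<le> ennreal (8 * t * sqrt (t / eps) / c\<^sup>2)"
proof -
  let ?G = "\<lambda>y \<tau>. ennreal (indicator half_space y * (indicator {0<..<t} \<tau> * \<bar>Hint eps kap del x y t \<tau>\<bar>))"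
  let ?B = "4 * sqrt (t / eps) / c\<^sup>2"
  have "(\<integral>\<^sup>+y. ennreal (indicator half_space y * \<bar>Hker eps kap del x y t\<bar>) \<partial>lborel)
      \<le> (\<integral>\<^sup>+y. 2 * (\<integral>\<^sup>+\<tau>. ?G y \<tau> \<partial>lborel) \<partial>lborel)"
  proof (intro nn_integral_mono)
    fix y :: "(real^'n) \<times> real"
    show "ennreal (indicator half_space y * \<bar>Hker eps kap del x y t\<bar>) \<le> 2 * (\<integral>\<^sup>+\<tau>. ?G y \<tau> \<partial>lborel)"
    proof (cases "y \<in> half_space")
      case True
      then show ?thesis using H_pt_bound[OF eps, of t kap del x y] t by simp
    next
      case False
      then show ?thesis by simp
    qed
  qed
  also have "\<dots> = 2 * (\<integral>\<^sup>+y. (\<integral>\<^sup>+\<tau>. ?G y \<tau> \<partial>lborel) \<partial>lborel)"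
    by (rule nn_integral_cmult) measurable
  also have "(\<integral>\<^sup>+y. (\<integral>\<^sup>+\<tau>. ?G y \<tau> \<partial>lborel) \<partial>lborel) = (\<integral>\<^sup>+\<tau>. (\<integral>\<^sup>+y. ?G y \<tau> \<partial>lborel) \<partial>lborel)"
    by (rule lborel_pair.Fubini'[symmetric]) (simp only: lborel_prod measurable_lborel2; measurable)
  also have "\<dots> \<le> (\<integral>\<^sup>+\<tau>. ennreal ?B * indicator {0<..<t} \<tau> \<partial>lborel)"
  proof (intro nn_integral_mono)
    fix \<tau> :: real
    show "(\<integral>\<^sup>+y. ?G y \<tau> \<partial>lborel) \<le> ennreal ?B * indicator {0<..<t} \<tau>"
    proof (cases "\<tau> \<in> {0<..<t}")
      case True
      then show ?thesis using inner_B[OF eps kap del _ _ c, of \<tau> t] by simp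
    next
      case False
      then show ?thesis by simp
    qed
  qed
  also have "\<dots> = ennreal ?B * ennreal t"
    using t by (simp add: nn_integral_cmult_indicator)
  finally have "(\<integral>\<^sup>+y. ennreal (indicator half_space y * \<bar>Hker eps kap del x y t\<bar>) \<partial>lborel)
      \<le> 2 * (ennreal ?B * ennreal t)" by (simp add: mult_left_mono)
  also have "\<dots> = ennreal (8 * t * sqrt (t / eps) / c\<^sup>2)"
  proof -
    have B: "4 * sqrt (t / eps) / c\<^sup>2 \<ge> 0" using t c eps by simp
    have "8 * t * sqrt (t / eps) / c\<^sup>2 = 2 * (4 * sqrt (t / eps) / c\<^sup>2) * t" by (simp add: field_simps)
    then show ?thesis using ennreal_2mult[OF B, of t] t by (simp add: mult_ac)
  qed
  finally show ?thesis .
qed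

lemma HC_bound:
  fixes x :: "(real^'n) \<times> real"
  assumes eps: "eps > 0" and kap: "kap \<ge> 0" and del: "del > 0" and t: "t > 0"
    and c: "c > 0" "snd x \<ge> c"
  shows "(\<integral>\<^sup>+y'. ennreal \<bar>Hker eps kap del x (y', 0) t\<bar> \<partial>lborel)
         \<le> ennreal (128 * t * sqrt (t / eps) / c^3)"
proof -
  let ?G = "\<lambda>y' \<tau>. ennreal (indicator {0<..<t} \<tau> * \<bar>Hint eps kap del x (y', 0) t \<tau>\<bar>)"
  let ?B = "64 * sqrt (t / eps) / c^3"
  have "(\<integral>\<^sup>+y'. ennreal \<bar>Hker eps kap del x (y', 0) t\<bar> \<partial>lborel)
      \<le> (\<integral>\<^sup>+y'. 2 * (\<integral>\<^sup>+\<tau>. ?G y' \<tau> \<partial>lborel) \<partial>lborel)"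
    using t by (intro nn_integral_mono H_pt_bound[OF eps]) simp
  also have "\<dots> = 2 * (\<integral>\<^sup>+y'. (\<integral>\<^sup>+\<tau>. ?G y' \<tau> \<partial>lborel) \<partial>lborel)"
    by (rule nn_integral_cmult) measurable
  also have "(\<integral>\<^sup>+y'. (\<integral>\<^sup>+\<tau>. ?G y' \<tau> \<partial>lborel) \<partial>lborel) = (\<integral>\<^sup>+\<tau>. (\<integral>\<^sup>+y'. ?G y' \<tau> \<partial>lborel) \<partial>lborel)"
    by (rule lborel_pair.Fubini'[symmetric]) (simp only: lborel_prod measurable_lborel2; measurable)
  also have "\<dots> \<le> (\<integral>\<^sup>+\<tau>. ennreal ?B * indicator {0<..<t} \<tau> \<partial>lborel)"
  proof (intro nn_integral_mono)
    fix \<tau> :: real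
    show "(\<integral>\<^sup>+y'. ?G y' \<tau> \<partial>lborel) \<le> ennreal ?B * indicator {0<..<t} \<tau>"
    proof (cases "\<tau> \<in> {0<..<t}")
      case True
      define s where "s = (t - \<tau>) / eps"
      define \<sigma> where "\<sigma> = (t - \<tau>) / eps + kap / del * \<tau>"
      define a where "a = snd x + \<tau> / del"
      have s: "s > 0" using eps True by (simp add: s_def)
      have \<sigma>: "\<sigma> > 0" using eps True kap del unfolding \<sigma>_def
        by (intro add_pos_nonneg) (auto intro!: mult_nonneg_nonneg)
      have "\<tau> / del > 0" using True del by simp
      then have a: "a \<ge> c" using c by (simp add: a_def)
      have "(\<integral>\<^sup>+y'. ?G y' \<tau> \<partial>lborel) = (\<integral>\<^sup>+y'. ennreal (heat (real CARD('n)) (norm (y' - fst x)) \<sigma>) * ennreal \<bar>Dexp a s\<bar> \<partial>lborel)"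
        using True by (intro nn_integral_cong)
          (auto simp: Hint_def abs_mult heat_nonneg norm_minus_commute ennreal_mult s_def \<sigma>_def a_def)
      also have "\<dots> = (\<integral>\<^sup>+y'. ennreal (heat (real CARD('n)) (norm (y' - fst x)) \<sigma>) \<partial>lborel) * ennreal \<bar>Dexp a s\<bar>"
        by (rule nn_integral_multc) measurable
      also have "\<dots> = ennreal \<bar>Dexp a s\<bar>"
        using gauss_nn_vec[OF \<sigma>, of "fst x"] by simp
      also have "\<dots> \<le> ennreal ?B"
      proof (intro ennreal_leI)
        have "\<bar>Dexp a s\<bar> \<le> 64 * sqrt s / a^3" using Dexp_bound[OF s, of a] a c by simp
        also have "\<dots> \<le> 64 * sqrt (t / eps) / c^3"
        proof (intro frac_le mult_left_mono real_sqrt_le_mono power_mono)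
          show "s \<le> t / eps" using True eps by (simp add: s_def divide_right_mono)
        qed (use c a True eps in auto)
        finally show "\<bar>Dexp a s\<bar> \<le> ?B" .
      qed
      finally show ?thesis using True by simp
    next
      case False
      then show ?thesis by simp
    qed
  qed
  also have "\<dots> = ennreal ?B * ennreal t"
    using t by (simp add: nn_integral_cmult_indicator)
  finally have "(\<integral>\<^sup>+y'. ennreal \<bar>Hker eps kap del x (y', 0) t\<bar> \<partial>lborel)
      \<le> 2 * (ennreal ?B * ennreal t)" by (simp add: mult_left_mono)
  also have "\<dots> = ennreal (128 * t * sqrt (t / eps) / c^3)"
  proof -
    have B: "64 * sqrt (t / eps) / c^3 \<ge> 0" using t c eps by simp
    have "128 * t * sqrt (t / eps) / c^3 = 2 * (64 * sqrt (t / eps) / c^3) * t" by (simp add: field_simps)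
    then show ?thesis using ennreal_2mult[OF B, of t] t by (simp add: mult_ac)
  qed
  finally show ?thesis .
qed


lemma gauss_P:
  fixes x :: "(real^'n) \<times> real"
  assumes s: "s > 0"
  shows "integrable lborel (\<lambda>y. heat (real CARD('n) + 1) (norm (x - y)) s)"
    and "(\<integral>y. heat (real CARD('n) + 1) (norm (x - y)) s \<partial>lborel) = 1"
  using gauss_int[OF s, of x] by (simp_all add: norm_minus_commute add.commute)

lemma heat_ratio:
  assumes s: "s > 0"
  shows "heat d r s = 2 powr (d / 2) * exp (- r\<^sup>2 / (8 * s)) * heat d r (2 * s)"
proof -
  have m: "(2 * (4 * pi * s)) powr (- d / 2) = 2 powr (- d / 2) * (4 * pi * s) powr (- d / 2)"
    by (rule powr_mult)
  have one: "2 powr (- d / 2) * 2 powr (d / 2) = (1::real)"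
    by (simp add: powr_add[symmetric])
  have "(4 * pi * s) powr (- d / 2) = (2 powr (- d / 2) * 2 powr (d / 2)) * (4 * pi * s) powr (- d / 2)"
    by (simp only: one mult_1)
  also have "\<dots> = (2 * (4 * pi * s)) powr (- d / 2) * 2 powr (d / 2)"
    by (subst m) (simp only: mult_ac)
  also have "2 * (4 * pi * s) = 4 * pi * (2 * s)" by simp
  finally have p: "(4 * pi * s) powr (- d / 2) = (4 * pi * (2 * s)) powr (- d / 2) * 2 powr (d / 2)" .
  have e: "exp (- r\<^sup>2 / (4 * s)) = exp (- r\<^sup>2 / (4 * (2 * s))) * exp (- r\<^sup>2 / (8 * s))"
    using s by (simp add: exp_add[symmetric] field_simps)
  show ?thesis unfolding heat_def p e by (simp only: mult_ac)
qed

lemma heat_tail: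
  assumes s: "s > 0" and r: "\<rho> \<le> r" "0 \<le> \<rho>"
  shows "heat d r s \<le> 2 powr (d / 2) * exp (- \<rho>\<^sup>2 / (8 * s)) * heat d r (2 * s)"
proof -
  have "\<rho>\<^sup>2 \<le> r\<^sup>2" using r by (intro power_mono) auto
  then have "exp (- r\<^sup>2 / (8 * s)) \<le> exp (- \<rho>\<^sup>2 / (8 * s))"
    using s by (simp add: divide_right_mono)
  then show ?thesis unfolding heat_ratio[OF s, of d r]
    by (intro mult_right_mono mult_left_mono heat_nonneg) auto
qed

lemma heat_mono:
  assumes s: "s > 0" and r: "0 \<le> r1" "r1 \<le> r2"
  shows "heat d r2 s \<le> heat d r1 s"
proof -
  have "r1\<^sup>2 \<le> r2\<^sup>2" using r by (intro power_mono) auto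
  then have "exp (- r2\<^sup>2 / (4 * s)) \<le> exp (- r1\<^sup>2 / (4 * s))"
    using s by (simp add: divide_right_mono)
  then show ?thesis unfolding heat_def by (intro mult_left_mono) auto
qed

lemma refl_facts:
  fixes x y :: "(real^'n) \<times> real"
  assumes "snd x \<ge> 0" "snd y \<ge> 0"
  shows "norm (x - y) \<le> norm (x - refl_pt y)" and "snd x + snd y \<le> norm (x - refl_pt y)"
proof -
  obtain a b where x: "x = (a, b)" by (cases x)
  obtain a' b' where y: "y = (a', b')" by (cases y)
  have "0 \<le> b * b'" using assms x y by simp
  then have 1: "(b - b')\<^sup>2 \<le> (b + b')\<^sup>2" by (simp add: power2_eq_square algebra_simps)
  show "norm (x - y) \<le> norm (x - refl_pt y)"
    using 1 unfolding x y refl_pt_def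
    by (simp add: norm_Pair)
  show "snd x + snd y \<le> norm (x - refl_pt y)"
    using norm_snd_le[of "b + b'" "a - a'"] assms unfolding x y refl_pt_def by simp
qed

lemma snd_dist:
  fixes x y :: "(real^'n) \<times> real"
  shows "\<bar>snd x - snd y\<bar> \<le> norm (x - y)"
  using norm_snd_le[of "snd x - snd y" "fst x - fst y"] by (simp add: prod_eq_iff flip: minus_prod_def)


lemma G0_meas[measurable]:
  fixes x :: "(real^'n) \<times> real"
  shows "(\<lambda>y. G0 x y s) \<in> borel_measurable borel"
  unfolding G0_def refl_pt_def by measurable

lemma termA:
  fixes x :: "(real^'n) \<times> real" and \<phi> :: "(real^'n) \<times> real \<Rightarrow> real"
  assumes s: "s > 0" and \<rho>: "\<rho> > 0" "\<rho> \<le> c" and xc: "snd x \<ge> c"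
    and M: "\<forall>y\<in>half_space. \<bar>\<phi> y\<bar> \<le> M" and Mx: "\<bar>\<phi> x\<bar> \<le> M"
    and uc: "\<forall>y. dist y x < \<rho> \<longrightarrow> y \<in> half_space \<and> \<bar>\<phi> y - \<phi> x\<bar> \<le> \<epsilon>"
    and \<phi>c: "continuous_on half_space \<phi>"
  shows "integrable lborel (\<lambda>y. indicator half_space y * (G0 x y s * \<phi> y))"
    and "\<bar>(\<integral>y. indicator half_space y * (G0 x y s * \<phi> y) \<partial>lborel) - \<phi> x\<bar>
          \<le> \<epsilon> + 3 * M * (2 powr ((real CARD('n) + 1) / 2) * exp (- \<rho>\<^sup>2 / (8 * s)))"
proof -
  define N where "N = real CARD('n) + 1"
  define \<Gamma>1 where "\<Gamma>1 y = heat N (norm (x - y)) s" for y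
  define \<Gamma>2 where "\<Gamma>2 y = heat N (norm (x - y)) (2 * s)" for y
  define \<Gamma>r where "\<Gamma>r y = heat N (norm (x - refl_pt y)) s" for y
  define E where "E = 2 powr (N / 2) * exp (- \<rho>\<^sup>2 / (8 * s))"
  define f where "f y = indicator half_space y * (G0 x y s * \<phi> y)" for y
  have c: "c > 0" using \<rho> by simp
  have M0: "M \<ge> 0" using Mx by simp
  have eps0: "\<epsilon> \<ge> 0" using uc[rule_format, of x] \<rho> by simp
  have E0: "E \<ge> 0" by (simp add: E_def)
  have G0e: "G0 x y s = \<Gamma>1 y - \<Gamma>r y" for y
    by (simp add: G0_def \<Gamma>1_def \<Gamma>r_def N_def)
  have s2: "2 * s > 0" using s by simp
  have i1: "integrable lborel \<Gamma>1" and I1: "(\<integral>y. \<Gamma>1 y \<partial>lborel) = 1"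
    using gauss_P[OF s, of x] unfolding \<Gamma>1_def[abs_def] N_def by simp_all
  have i2: "integrable lborel \<Gamma>2" and I2: "(\<integral>y. \<Gamma>2 y \<partial>lborel) = 1"
    using gauss_P[OF s2, of x] unfolding \<Gamma>2_def[abs_def] N_def by simp_all
  have G1nn: "0 \<le> \<Gamma>1 y" "0 \<le> \<Gamma>2 y" "0 \<le> \<Gamma>r y" for y
    by (simp_all add: \<Gamma>1_def \<Gamma>2_def \<Gamma>r_def heat_nonneg)
  have refl1: "\<Gamma>r y \<le> \<Gamma>1 y" if "y \<in> half_space" for y
  proof -
    have "snd y \<ge> 0" "snd x \<ge> 0" using that xc c by (auto simp: half_space_def)
    then show ?thesis unfolding \<Gamma>r_def \<Gamma>1_def using refl_facts(1)[of x y] s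
      by (intro heat_mono) auto
  qed
  have refl2: "\<Gamma>r y \<le> E * \<Gamma>2 y" if "y \<in> half_space" for y
  proof -
    have y0: "snd y \<ge> 0" "snd x \<ge> 0" using that xc c by (auto simp: half_space_def)
    have r: "\<rho> \<le> norm (x - refl_pt y)" using refl_facts(2)[OF y0(2,1)] y0 xc \<rho> by linarith
    have "\<Gamma>r y \<le> E * heat N (norm (x - refl_pt y)) (2 * s)"
      unfolding \<Gamma>r_def E_def using heat_tail[OF s r] \<rho> by simp
    also have "\<dots> \<le> E * \<Gamma>2 y" unfolding \<Gamma>2_def using refl_facts(1)[OF y0(2,1)] s2 E0
      by (intro mult_left_mono heat_mono) auto
    finally show ?thesis .
  qed
  have far: "\<Gamma>1 y \<le> E * \<Gamma>2 y" if "\<rho> \<le> norm (x - y)" for y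
    unfolding \<Gamma>1_def \<Gamma>2_def E_def using heat_tail[OF s that] \<rho> by simp
  have fm: "f \<in> borel_measurable lborel"
  proof -
    have "(\<lambda>y. indicator half_space y *\<^sub>R \<phi> y) \<in> borel_measurable borel"
      by (rule borel_measurable_continuous_on_indicator[OF half_space_borel \<phi>c])
    then have "(\<lambda>y. G0 x y s * (indicator half_space y *\<^sub>R \<phi> y)) \<in> borel_measurable borel"
      by measurable
    moreover have "f = (\<lambda>y. G0 x y s * (indicator half_space y *\<^sub>R \<phi> y))"
      by (auto simp: f_def fun_eq_iff)
    ultimately show ?thesis by simp
  qed
  have fb: "\<bar>f y\<bar> \<le> M * \<Gamma>1 y" for y
  proof (cases "y \<in> half_space")
    case True
    have "\<bar>G0 x y s\<bar> \<le> \<Gamma>1 y" using refl1[OF True] G1nn[of y] unfolding G0e by simp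
    moreover have "\<bar>\<phi> y\<bar> \<le> M" using M True by auto
    ultimately have "\<bar>G0 x y s\<bar> * \<bar>\<phi> y\<bar> \<le> \<Gamma>1 y * M"
      by (intro mult_mono) (auto simp: G1nn)
    then show ?thesis using True by (simp add: f_def abs_mult mult.commute)
  next
    case False
    then show ?thesis using M0 G1nn by (simp add: f_def)
  qed
  have fi: "integrable lborel f"
    by (rule Bochner_Integration.integrable_bound[OF integrable_mult_right[OF i1, of M] fm])
       (use fb M0 G1nn in \<open>auto intro!: AE_I2 simp: abs_mult\<close>)
  then show "integrable lborel (\<lambda>y. indicator half_space y * (G0 x y s * \<phi> y))"
    by (simp add: f_def[abs_def])
  have key: "\<bar>f y - \<phi> x * \<Gamma>1 y\<bar> \<le> \<epsilon> * \<Gamma>1 y + 3 * M * E * \<Gamma>2 y" for y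
  proof (cases "y \<in> half_space")
    case True
    have fy: "f y - \<phi> x * \<Gamma>1 y = \<Gamma>1 y * (\<phi> y - \<phi> x) - \<Gamma>r y * \<phi> y"
      using True by (simp add: f_def G0e algebra_simps)
    have py: "\<bar>\<phi> y\<bar> \<le> M" using M True by auto
    have r1: "\<bar>\<Gamma>r y * \<phi> y\<bar> \<le> M * E * \<Gamma>2 y"
    proof -
      have "\<bar>\<Gamma>r y * \<phi> y\<bar> \<le> (E * \<Gamma>2 y) * M"
        using refl2[OF True] py G1nn by (simp add: abs_mult) (intro mult_mono, auto intro!: mult_nonneg_nonneg simp: E0 G1nn)
      then show ?thesis by (simp add: mult_ac)
    qed
    show ?thesis
    proof (cases "dist y x < \<rho>")
      case True
      have "\<bar>\<phi> y - \<phi> x\<bar> \<le> \<epsilon>" using uc[rule_format, OF True] by simp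
      then have "\<bar>\<Gamma>1 y * (\<phi> y - \<phi> x)\<bar> \<le> \<epsilon> * \<Gamma>1 y"
      proof -
        assume h: "\<bar>\<phi> y - \<phi> x\<bar> \<le> \<epsilon>"
        have "\<bar>\<Gamma>1 y * (\<phi> y - \<phi> x)\<bar> = \<Gamma>1 y * \<bar>\<phi> y - \<phi> x\<bar>" by (simp add: abs_mult G1nn)
        also have "\<dots> \<le> \<Gamma>1 y * \<epsilon>" by (rule mult_left_mono[OF h G1nn(1)])
        also have "\<dots> = \<epsilon> * \<Gamma>1 y" by (rule mult.commute)
        finally show ?thesis .
      qed
      moreover have "M * E * \<Gamma>2 y \<le> 3 * M * E * \<Gamma>2 y"
        using M0 E0 G1nn by (simp add: mult_nonneg_nonneg)
      ultimately show ?thesis unfolding fy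
        using r1 abs_triangle_ineq4[of "\<Gamma>1 y * (\<phi> y - \<phi> x)" "\<Gamma>r y * \<phi> y"] by linarith
    next
      case False
      then have "\<rho> \<le> norm (x - y)" by (simp add: dist_norm norm_minus_commute)
      then have g: "\<Gamma>1 y \<le> E * \<Gamma>2 y" by (rule far)
      have "\<bar>\<phi> y - \<phi> x\<bar> \<le> 2 * M" using py Mx by linarith
      then have "\<bar>\<Gamma>1 y * (\<phi> y - \<phi> x)\<bar> \<le> (E * \<Gamma>2 y) * (2 * M)"
        using g G1nn by (simp add: abs_mult) (intro mult_mono, auto intro!: mult_nonneg_nonneg simp: E0 G1nn)
      then have "\<bar>\<Gamma>1 y * (\<phi> y - \<phi> x)\<bar> \<le> 2 * M * E * \<Gamma>2 y" by (simp add: mult_ac)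
      moreover have "0 \<le> \<epsilon> * \<Gamma>1 y" using eps0 G1nn by simp
      ultimately show ?thesis unfolding fy
        using r1 abs_triangle_ineq4[of "\<Gamma>1 y * (\<phi> y - \<phi> x)" "\<Gamma>r y * \<phi> y"] by linarith
    qed
  next
    case False
    have "snd y \<le> 0" using False by (cases y) (auto simp: half_space_def)
    then have "\<rho> \<le> norm (x - y)" using snd_dist[of x y] xc \<rho> by linarith
    then have g: "\<Gamma>1 y \<le> E * \<Gamma>2 y" by (rule far)
    have "\<bar>\<phi> x * \<Gamma>1 y\<bar> \<le> M * (E * \<Gamma>2 y)"
      using g Mx G1nn by (simp add: abs_mult) (intro mult_mono, auto intro!: mult_nonneg_nonneg simp: E0 G1nn)
    moreover have "0 \<le> \<epsilon> * \<Gamma>1 y" "0 \<le> M * E * \<Gamma>2 y" using eps0 G1nn M0 E0 by simp_all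
    ultimately show ?thesis using False by (simp add: f_def mult_ac)
  qed
  have "(\<integral>y. f y \<partial>lborel) - \<phi> x = (\<integral>y. f y - \<phi> x * \<Gamma>1 y \<partial>lborel)"
    using fi i1 I1 by (simp add: Bochner_Integration.integral_diff)
  also have "\<bar>\<dots>\<bar> \<le> (\<integral>y. \<epsilon> * \<Gamma>1 y + 3 * M * E * \<Gamma>2 y \<partial>lborel)"
    by (rule integral_abs_bound_integral) (use fi i1 i2 key in auto)
  also have "\<dots> = \<epsilon> + 3 * M * E"
    using i1 i2 I1 I2 by simp
  finally show "\<bar>(\<integral>y. indicator half_space y * (G0 x y s * \<phi> y) \<partial>lborel) - \<phi> x\<bar>
          \<le> \<epsilon> + 3 * M * (2 powr ((real CARD('n) + 1) / 2) * exp (- \<rho>\<^sup>2 / (8 * s)))"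
    by (simp add: f_def[abs_def] E_def N_def mult_ac)
qed


lemma termB:
  fixes x :: "(real^'n) \<times> real" and \<phi> :: "(real^'n) \<times> real \<Rightarrow> real"
  assumes eps: "eps > 0" and kap: "kap \<ge> 0" and del: "del > 0" and t: "t > 0"
    and c: "c > 0" "snd x \<ge> c"
    and M: "\<forall>y\<in>half_space. \<bar>\<phi> y\<bar> \<le> M" and M0: "M \<ge> 0"
    and \<phi>c: "continuous_on half_space \<phi>"
  shows "integrable lborel (\<lambda>y. indicator half_space y * (Hker eps kap del x y t * \<phi> y))"
    and "\<bar>\<integral>y. indicator half_space y * (Hker eps kap del x y t * \<phi> y) \<partial>lborel\<bar> \<le> M * (8 * t * sqrt (t / eps) / c\<^sup>2)"
proof -
  define f where "f y = indicator half_space y * (Hker eps kap del x y t * \<phi> y)" for y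
  define g where "g y = ennreal (indicator half_space y * \<bar>Hker eps kap del x y t\<bar>)" for y
  have Hm: "(\<lambda>y. Hker eps kap del x y t) \<in> borel_measurable borel"
    using Hker_meas[OF eps, of t kap del x] t by simp
  have gm: "g \<in> borel_measurable lborel"
    unfolding g_def[abs_def] using Hm by simp
  have fm: "f \<in> borel_measurable lborel"
  proof -
    have "(\<lambda>y. indicator half_space y *\<^sub>R \<phi> y) \<in> borel_measurable borel"
      by (rule borel_measurable_continuous_on_indicator[OF half_space_borel \<phi>c])
    then have "(\<lambda>y. Hker eps kap del x y t * (indicator half_space y *\<^sub>R \<phi> y)) \<in> borel_measurable borel"
      using Hm by measurable
    moreover have "f = (\<lambda>y. Hker eps kap del x y t * (indicator half_space y *\<^sub>R \<phi> y))"
      by (auto simp: f_def fun_eq_iff)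
    ultimately show ?thesis by simp
  qed
  have pt: "ennreal (norm (f y)) \<le> ennreal M * g y" for y
  proof (cases "y \<in> half_space")
    case True
    have "\<bar>Hker eps kap del x y t\<bar> * \<bar>\<phi> y\<bar> \<le> \<bar>Hker eps kap del x y t\<bar> * M"
      using M True by (intro mult_left_mono) auto
    then show ?thesis using True M0
      by (simp add: f_def g_def abs_mult ennreal_mult[symmetric] mult.commute)
  next
    case False
    then show ?thesis by (simp add: f_def g_def)
  qed
  have "(\<integral>\<^sup>+y. ennreal (norm (f y)) \<partial>lborel) \<le> (\<integral>\<^sup>+y. ennreal M * g y \<partial>lborel)"
    by (intro nn_integral_mono pt)
  also have "\<dots> = ennreal M * (\<integral>\<^sup>+y. g y \<partial>lborel)"
    by (rule nn_integral_cmult[OF gm])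
  also have "\<dots> \<le> ennreal M * ennreal (8 * t * sqrt (t / eps) / c\<^sup>2)"
    unfolding g_def by (intro mult_left_mono HB_bound[OF eps kap del t c]) auto
  also have "\<dots> = ennreal (M * (8 * t * sqrt (t / eps) / c\<^sup>2))"
    by (rule ennreal_mult[symmetric]) (use M0 t c eps in auto)
  finally have nb: "(\<integral>\<^sup>+y. ennreal (norm (f y)) \<partial>lborel) \<le> ennreal (M * (8 * t * sqrt (t / eps) / c\<^sup>2))" .
  have fi: "integrable lborel f"
    by (rule integrableI_bounded[OF fm]) (use nb in \<open>auto intro: le_less_trans\<close>)
  then show "integrable lborel (\<lambda>y. indicator half_space y * (Hker eps kap del x y t * \<phi> y))"
    by (simp add: f_def[abs_def])
  have "ennreal (norm (integral\<^sup>L lborel f)) \<le> ennreal (M * (8 * t * sqrt (t / eps) / c\<^sup>2))"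
    using norm_int_le_nn[of lborel f] nb by (rule order_trans)
  then have "norm (integral\<^sup>L lborel f) \<le> M * (8 * t * sqrt (t / eps) / c\<^sup>2)"
    using M0 t c eps by (subst (asm) ennreal_le_iff) auto
  then show "\<bar>\<integral>y. indicator half_space y * (Hker eps kap del x y t * \<phi> y) \<partial>lborel\<bar> \<le> M * (8 * t * sqrt (t / eps) / c\<^sup>2)"
    by (simp add: f_def[abs_def])
qed

lemma termC:
  fixes x :: "(real^'n) \<times> real" and \<psi> :: "real^'n \<Rightarrow> real"
  assumes eps: "eps > 0" and kap: "kap \<ge> 0" and del: "del > 0" and t: "t > 0"
    and c: "c > 0" "snd x \<ge> c"
    and C: "AE y in lborel. \<bar>\<psi> y\<bar> \<le> C" and C0: "C \<ge> 0"
  shows "\<bar>\<integral>y'. Gker eps kap del x (y', 0) t * \<psi> y' \<partial>lborel\<bar> \<le> C / del * (128 * t * sqrt (t / eps) / c^3)"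
proof -
  define g where "g y' = ennreal \<bar>Hker eps kap del x (y', 0) t\<bar>" for y'
  have Hm: "(\<lambda>y. Hker eps kap del x y t) \<in> borel_measurable borel"
    using Hker_meas[OF eps, of t kap del x] t by simp
  have emb: "(\<lambda>y'::real^'n. (y', 0::real)) \<in> borel_measurable borel"
    by (intro borel_measurable_continuous_onI continuous_intros)
  have gm: "g \<in> borel_measurable lborel"
    unfolding g_def[abs_def] using measurable_compose[OF emb Hm] by simp
  have G: "Gker eps kap del x (y', 0) t = Hker eps kap del x (y', 0) t / del" for y'
    by (simp add: Gker_def G0_def refl_pt_def)
  have "AE y' in lborel. ennreal (norm (Gker eps kap del x (y', 0) t * \<psi> y')) \<le> ennreal (C / del) * g y'"
    using C
  proof eventually_elim
    case (elim y')
    have "\<bar>Hker eps kap del x (y', 0) t\<bar> / del * \<bar>\<psi> y'\<bar> \<le> \<bar>Hker eps kap del x (y', 0) t\<bar> / del * C"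
      using elim del by (intro mult_left_mono) auto
    then show ?case using C0 del
      by (simp add: G g_def abs_mult ennreal_mult[symmetric] mult_ac)
  qed
  then have "(\<integral>\<^sup>+y'. ennreal (norm (Gker eps kap del x (y', 0) t * \<psi> y')) \<partial>lborel) \<le> (\<integral>\<^sup>+y'. ennreal (C / del) * g y' \<partial>lborel)"
    by (rule nn_integral_mono_AE)
  also have "\<dots> = ennreal (C / del) * (\<integral>\<^sup>+y'. g y' \<partial>lborel)"
    by (rule nn_integral_cmult[OF gm])
  also have "\<dots> \<le> ennreal (C / del) * ennreal (128 * t * sqrt (t / eps) / c^3)"
    unfolding g_def by (intro mult_left_mono HC_bound[OF eps kap del t c]) auto
  also have "\<dots> = ennreal (C / del * (128 * t * sqrt (t / eps) / c^3))"
    by (rule ennreal_mult[symmetric]) (use C0 del t c eps in auto)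
  finally have nb: "(\<integral>\<^sup>+y'. ennreal (norm (Gker eps kap del x (y', 0) t * \<psi> y')) \<partial>lborel) \<le> ennreal (C / del * (128 * t * sqrt (t / eps) / c^3))" .
  have "ennreal (norm (\<integral>y'. Gker eps kap del x (y', 0) t * \<psi> y' \<partial>lborel)) \<le> ennreal (C / del * (128 * t * sqrt (t / eps) / c^3))"
    using norm_int_le_nn nb by (rule order_trans)
  then show ?thesis
    using C0 del t c eps by (subst (asm) ennreal_le_iff) auto
qed


lemma usol_bound:
  fixes x :: "(real^'n) \<times> real" and \<phi> :: "(real^'n) \<times> real \<Rightarrow> real" and \<psi> :: "real^'n \<Rightarrow> real"
  assumes eps: "eps > 0" and kap: "kap \<ge> 0" and del: "del > 0" and t: "t > 0"
    and \<rho>: "\<rho> > 0" "\<rho> \<le> c" and xc: "snd x \<ge> c"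
    and M: "\<forall>y\<in>half_space. \<bar>\<phi> y\<bar> \<le> M" and xh: "x \<in> half_space"
    and uc: "\<forall>y. dist y x < \<rho> \<longrightarrow> y \<in> half_space \<and> \<bar>\<phi> y - \<phi> x\<bar> \<le> \<epsilon>"
    and \<phi>c: "continuous_on half_space \<phi>"
    and C: "AE y in lborel. \<bar>\<psi> y\<bar> \<le> C" and C0: "C \<ge> 0"
  shows "\<bar>usol eps kap del \<phi> \<psi> x t - \<phi> x\<bar> \<le>
      \<epsilon> + 3 * M * (2 powr ((real CARD('n) + 1) / 2) * exp (- \<rho>\<^sup>2 / (8 * (t / eps))))
      + M * (8 * t * sqrt (t / eps) / c\<^sup>2) / del
      + del / eps * (C / del * (128 * t * sqrt (t / eps) / c^3))"
proof -
  have c: "c > 0" using \<rho> by simp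
  have Mx: "\<bar>\<phi> x\<bar> \<le> M" using M xh by auto
  have M0: "M \<ge> 0" using Mx by simp
  have s: "t / eps > 0" using t eps by simp
  define fA where "fA y = indicator half_space y * (G0 x y (t / eps) * \<phi> y)" for y
  define fB where "fB y = indicator half_space y * (Hker eps kap del x y t * \<phi> y)" for y
  have iA: "integrable lborel fA"
    and bA: "\<bar>(\<integral>y. fA y \<partial>lborel) - \<phi> x\<bar>
          \<le> \<epsilon> + 3 * M * (2 powr ((real CARD('n) + 1) / 2) * exp (- \<rho>\<^sup>2 / (8 * (t / eps))))"
    using termA[OF s \<rho> xc M Mx uc \<phi>c] unfolding fA_def[abs_def] by auto
  have iB: "integrable lborel fB"
    and bB: "\<bar>\<integral>y. fB y \<partial>lborel\<bar> \<le> M * (8 * t * sqrt (t / eps) / c\<^sup>2)"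
    using termB[OF eps kap del t c xc M M0 \<phi>c] unfolding fB_def[abs_def] by auto
  have bC: "\<bar>\<integral>y'. Gker eps kap del x (y', 0) t * \<psi> y' \<partial>lborel\<bar> \<le> C / del * (128 * t * sqrt (t / eps) / c^3)"
    by (rule termC[OF eps kap del t c xc C C0])
  have split: "(\<lambda>y. indicator half_space y *\<^sub>R (Gker eps kap del x y t * \<phi> y)) = (\<lambda>y. fA y + fB y / del)"
    by (auto simp: fun_eq_iff fA_def fB_def Gker_def algebra_simps add_divide_distrib split: split_indicator)
  have I1: "(LINT y : half_space | lborel. Gker eps kap del x y t * \<phi> y) = (\<integral>y. fA y \<partial>lborel) + (\<integral>y. fB y \<partial>lborel) / del"
    unfolding set_lebesgue_integral_def split using iA iB by simp
  define I2 where "I2 = (\<integral>y'. Gker eps kap del x (y', 0) t * \<psi> y' \<partial>lborel)"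
  have u: "usol eps kap del \<phi> \<psi> x t - \<phi> x = ((\<integral>y. fA y \<partial>lborel) - \<phi> x) + (\<integral>y. fB y \<partial>lborel) / del + del / eps * I2"
    unfolding usol_def I1 I2_def by simp
  have "\<bar>(\<integral>y. fB y \<partial>lborel) / del\<bar> = \<bar>\<integral>y. fB y \<partial>lborel\<bar> / del" using del by simp
  also have "\<dots> \<le> M * (8 * t * sqrt (t / eps) / c\<^sup>2) / del"
    by (rule divide_right_mono[OF bB]) (use del in simp)
  finally have "\<bar>(\<integral>y. fB y \<partial>lborel) / del\<bar> \<le> M * (8 * t * sqrt (t / eps) / c\<^sup>2) / del" .
  moreover have "\<bar>del / eps * I2\<bar> \<le> del / eps * (C / del * (128 * t * sqrt (t / eps) / c^3))"
  proof -
    have "\<bar>del / eps * I2\<bar> = del / eps * \<bar>I2\<bar>" using del eps by (simp add: abs_mult)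
    also have "\<dots> \<le> del / eps * (C / del * (128 * t * sqrt (t / eps) / c^3))"
      by (rule mult_left_mono) (use bC del eps in \<open>simp_all add: I2_def\<close>)
    finally show ?thesis .
  qed
  ultimately show ?thesis unfolding u using bA
    by (smt (verit) abs_triangle_ineq)
qed


lemma lim_exp: "a > 0 \<Longrightarrow> ((\<lambda>x::real. exp (- a * x)) \<longlongrightarrow> 0) at_top"
  by real_asymp

lemma lim_sq: "T > 0 \<Longrightarrow> ((\<lambda>x::real. T * sqrt (T / x)) \<longlongrightarrow> 0) at_top"
  by real_asymp

lemma lim_sq2: "T > 0 \<Longrightarrow> ((\<lambda>x::real. T * sqrt (T / x) / x) \<longlongrightarrow> 0) at_top"
  by real_asymp

lemma c_lemma:
  fixes K :: "((real^'n) \<times> real) set"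
  assumes K: "compact K" "K \<subseteq> half_space" "K \<noteq> {}"
  obtains c where "c > 0" "\<forall>x\<in>K. snd x \<ge> c"
proof -
  have "compact (snd ` K)"
    by (rule compact_continuous_image[OF _ K(1)]) (intro continuous_intros)
  then obtain m where m: "m \<in> snd ` K" "\<forall>t\<in>snd ` K. m \<le> t"
    using compact_attains_inf[of "snd ` K"] K(3) by blast
  have "m > 0" using m(1) K(2) by (auto simp: half_space_def)
  then show ?thesis using m(2) that by auto
qed

lemma uc_lemma:
  fixes K :: "((real^'n) \<times> real) set" and \<phi> :: "(real^'n) \<times> real \<Rightarrow> real"
  assumes K: "compact K" "K \<subseteq> half_space" and c: "c > 0" "\<forall>x\<in>K. snd x \<ge> c"
    and \<phi>c: "continuous_on half_space \<phi>" and e: "\<epsilon> > 0"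
  obtains \<rho> where "\<rho> > 0" "\<rho> \<le> c" "\<forall>x\<in>K. \<forall>y. dist y x < \<rho> \<longrightarrow> y \<in> half_space \<and> \<bar>\<phi> y - \<phi> x\<bar> \<le> \<epsilon>"
proof -
  define K2 where "K2 = {x + z | x z. x \<in> K \<and> z \<in> cball 0 (c / 2)}"
  have K2c: "compact K2" unfolding K2_def by (intro compact_sums K(1) compact_cball)
  have sndz: "\<bar>snd z\<bar> \<le> norm z" for z :: "(real^'n) \<times> real"
    using norm_snd_le[of "snd z" "fst z"] by simp
  have K2h: "K2 \<subseteq> half_space"
  proof
    fix w assume "w \<in> K2"
    then obtain x z where w: "w = x + z" "x \<in> K" "z \<in> cball 0 (c / 2)" by (auto simp: K2_def)
    have "snd x \<ge> c" using c w by auto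
    moreover have "\<bar>snd z\<bar> \<le> c / 2" using sndz[of z] w(3) by (simp add: dist_norm)
    ultimately have "snd w > 0" using c w(1) by simp
    then show "w \<in> half_space" by (cases w) (simp add: half_space_def)
  qed
  have "uniformly_continuous_on K2 \<phi>"
    by (rule compact_uniformly_continuous[OF continuous_on_subset[OF \<phi>c K2h] K2c])
  then obtain d where d: "d > 0" "\<forall>x\<in>K2. \<forall>x'\<in>K2. dist x' x < d \<longrightarrow> dist (\<phi> x') (\<phi> x) < \<epsilon>"
    using e unfolding uniformly_continuous_on_def by blast
  define \<rho> where "\<rho> = min (c / 2) d"
  have "\<rho> > 0" "\<rho> \<le> c" using c d by (auto simp: \<rho>_def)
  moreover have "\<forall>x\<in>K. \<forall>y. dist y x < \<rho> \<longrightarrow> y \<in> half_space \<and> \<bar>\<phi> y - \<phi> x\<bar> \<le> \<epsilon>"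
  proof (intro ballI allI impI)
    fix x y assume x: "x \<in> K" and y: "dist y x < \<rho>"
    have xK2: "x \<in> K2" unfolding K2_def using x c by (intro CollectI exI[of _ x] exI[of _ 0]) auto
    have "y - x \<in> cball 0 (c / 2)" using y by (simp add: \<rho>_def dist_norm norm_minus_commute)
    then have yK2: "y \<in> K2" unfolding K2_def using x by (intro CollectI exI[of _ x] exI[of _ "y - x"]) auto
    have "dist (\<phi> y) (\<phi> x) < \<epsilon>" using d(2) xK2 yK2 y by (auto simp: \<rho>_def)
    then show "y \<in> half_space \<and> \<bar>\<phi> y - \<phi> x\<bar> \<le> \<epsilon>" using yK2 K2h by (auto simp: dist_real_def)
  qed
  ultimately show ?thesis using that by blast
qed


lemma uniform_main:
  fixes \<phi> :: "(real^'n) \<times> real \<Rightarrow> real" and \<psi> :: "real^'n \<Rightarrow> real" and K :: "((real^'n) \<times> real) set"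
  assumes phi_cont: "continuous_on half_space \<phi>"
    and phi_bdd: "bounded (\<phi> ` half_space)"
    and psi_Linf: "\<exists>C. AE y in lborel. \<bar>\<psi> y\<bar> \<le> C"
    and del: "del > 0" and kap: "kap \<ge> 0"
    and K: "compact K" "K \<subseteq> half_space" and T: "T > 0"
  shows "uniform_limit (K \<times> {0<..<T}) (\<lambda>eps (x, t). usol eps kap del \<phi> \<psi> x t) (\<lambda>(x, t). \<phi> x) at_top"
proof (cases "K = {}")
  case True
  then show ?thesis by (simp add: uniform_limit_iff)
next
  case False
  obtain M where M: "\<forall>y\<in>half_space. \<bar>\<phi> y\<bar> \<le> M"
    using phi_bdd unfolding bounded_iff by auto
  obtain x0 where "x0 \<in> K" using False by auto
  then have M0: "M \<ge> 0" using M K(2) by (meson abs_ge_zero order_trans subsetD)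
  obtain C0 where C0: "AE y in lborel. \<bar>\<psi> y\<bar> \<le> C0" using psi_Linf by auto
  define C where "C = max C0 0"
  have C: "AE y in lborel. \<bar>\<psi> y\<bar> \<le> C" using C0 by eventually_elim (simp add: C_def)
  have Cn: "C \<ge> 0" by (simp add: C_def)
  obtain c where c: "c > 0" "\<forall>x\<in>K. snd x \<ge> c" using c_lemma[OF K False] by blast
  show ?thesis unfolding uniform_limit_iff
  proof (intro allI impI)
    fix e :: real assume e: "e > 0"
    obtain \<rho> where \<rho>: "\<rho> > 0" "\<rho> \<le> c"
      and uc: "\<forall>x\<in>K. \<forall>y. dist y x < \<rho> \<longrightarrow> y \<in> half_space \<and> \<bar>\<phi> y - \<phi> x\<bar> \<le> e / 2"
      using uc_lemma[OF K c phi_cont, of "e / 2"] e by auto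
    define N where "N = real CARD('n) + 1"
    define a where "a = \<rho>\<^sup>2 / (8 * T)"
    define U where "U eps = 3 * M * (2 powr (N / 2) * exp (- a * eps))
        + (M * 8 / (c\<^sup>2 * del)) * (T * sqrt (T / eps))
        + (C * 128 / c^3) * (T * sqrt (T / eps) / eps)" for eps
    have a: "a > 0" using \<rho> T by (simp add: a_def)
    have "(U \<longlongrightarrow> 0) at_top"
      unfolding U_def[abs_def]
      by (intro tendsto_add_zero tendsto_mult_right_zero lim_exp lim_sq lim_sq2 a T)
    then have ev1: "eventually (\<lambda>eps. U eps < e / 2) at_top"
      using e by (intro order_tendstoD(2)) auto
    have ev2: "eventually (\<lambda>eps. eps > (0::real)) at_top" by (rule eventually_gt_at_top)
    show "\<forall>\<^sub>F eps in at_top. \<forall>xt\<in>K \<times> {0<..<T}.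
        dist ((\<lambda>eps (x, t). usol eps kap del \<phi> \<psi> x t) eps xt) ((\<lambda>(x, t). \<phi> x) xt) < e"
      using ev1 ev2
    proof eventually_elim
      case (elim eps)
      show ?case
      proof (intro ballI)
        fix xt assume xt: "xt \<in> K \<times> {0<..<T}"
        obtain x t where xt': "xt = (x, t)" by (cases xt)
        have x: "x \<in> K" and t: "0 < t" "t < T" using xt xt' by auto
        have xh: "x \<in> half_space" using x K(2) by auto
        have xc: "snd x \<ge> c" using c x by auto
        have eps: "eps > 0" using elim by simp
        have ucx: "\<forall>y. dist y x < \<rho> \<longrightarrow> y \<in> half_space \<and> \<bar>\<phi> y - \<phi> x\<bar> \<le> e / 2"
          using uc x by auto
        have b: "\<bar>usol eps kap del \<phi> \<psi> x t - \<phi> x\<bar> \<le>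
            e / 2 + 3 * M * (2 powr ((real CARD('n) + 1) / 2) * exp (- \<rho>\<^sup>2 / (8 * (t / eps))))
            + M * (8 * t * sqrt (t / eps) / c\<^sup>2) / del
            + del / eps * (C / del * (128 * t * sqrt (t / eps) / c^3))"
          by (rule usol_bound[OF eps kap del t(1) \<rho> xc M xh ucx phi_cont C Cn])
        have tT: "t * sqrt (t / eps) \<le> T * sqrt (T / eps)"
          using t eps by (intro mult_mono real_sqrt_le_mono divide_right_mono) auto
        have b1: "3 * M * (2 powr ((real CARD('n) + 1) / 2) * exp (- \<rho>\<^sup>2 / (8 * (t / eps))))
              \<le> 3 * M * (2 powr (N / 2) * exp (- a * eps))"
        proof -
          have q1: "\<rho>\<^sup>2 / (8 * (t / eps)) = (\<rho>\<^sup>2 * eps) / (8 * t)" using t eps by (simp add: field_simps)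
          have q2: "a * eps = (\<rho>\<^sup>2 * eps) / (8 * T)" by (simp add: a_def)
          have "(\<rho>\<^sup>2 * eps) / (8 * T) \<le> (\<rho>\<^sup>2 * eps) / (8 * t)"
            using t eps by (intro divide_left_mono) auto
          then have "exp (- \<rho>\<^sup>2 / (8 * (t / eps))) \<le> exp (- a * eps)"
            using q1 q2 by simp
          then show ?thesis using M0 by (intro mult_left_mono) (auto simp: N_def)
        qed
        have b2: "M * (8 * t * sqrt (t / eps) / c\<^sup>2) / del \<le> (M * 8 / (c\<^sup>2 * del)) * (T * sqrt (T / eps))"
        proof -
          have "M * (8 * t * sqrt (t / eps) / c\<^sup>2) / del = (M * 8 / (c\<^sup>2 * del)) * (t * sqrt (t / eps))"
            using c del by (simp add: field_simps)
          also have "\<dots> \<le> (M * 8 / (c\<^sup>2 * del)) * (T * sqrt (T / eps))"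
            using tT M0 c del by (intro mult_left_mono) auto
          finally show ?thesis .
        qed
        have b3: "del / eps * (C / del * (128 * t * sqrt (t / eps) / c^3)) \<le> (C * 128 / c^3) * (T * sqrt (T / eps) / eps)"
        proof -
          have "del / eps * (C / del * (128 * t * sqrt (t / eps) / c^3)) = (C * 128 / c^3) * (t * sqrt (t / eps) / eps)"
            using c del eps by (simp add: field_simps)
          also have "\<dots> \<le> (C * 128 / c^3) * (T * sqrt (T / eps) / eps)"
            using tT Cn c eps by (intro mult_left_mono divide_right_mono) auto
          finally show ?thesis .
        qed
        have "\<bar>usol eps kap del \<phi> \<psi> x t - \<phi> x\<bar> \<le> e / 2 + U eps"
          using b b1 b2 b3 unfolding U_def by linarith
        then have "\<bar>usol eps kap del \<phi> \<psi> x t - \<phi> x\<bar> < e" using elim by linarith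
        then show "dist ((\<lambda>eps (x, t). usol eps kap del \<phi> \<psi> x t) eps xt) ((\<lambda>(x, t). \<phi> x) xt) < e"
          by (simp add: xt' dist_real_def)
      qed
    qed
  qed
qed

theorem theorem4p4:
  fixes \<phi> :: "(real^'n) \<times> real \<Rightarrow> real" and \<psi> :: "real^'n \<Rightarrow> real"
    and \<delta> k :: real
  assumes phi_cont: "continuous_on half_space \<phi>"
    and phi_bdd: "bounded (\<phi> ` half_space)"
    and psi_meas: "\<psi> \<in> borel_measurable lborel"
    and psi_Linf: "\<exists>C. AE y in lborel. \<bar>\<psi> y\<bar> \<le> C"
    and delta_pos: "\<delta> > 0" and k_pos: "k > 0"
  shows "\<forall>K T. compact K \<and> K \<subseteq> half_space \<and> T > 0 \<longrightarrow>
           uniform_limit (K \<times> {0<..<T}) (\<lambda>eps (x, t). usol eps k \<delta> \<phi> \<psi> x t)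
             (\<lambda>(x, t). \<phi> x) at_top
         \<and> uniform_limit (K \<times> {0<..<T}) (\<lambda>eps (x, t). usol eps 0 \<delta> \<phi> \<psi> x t)
             (\<lambda>(x, t). \<phi> x) at_top"
proof (intro allI impI conjI)
  fix K :: "((real^'n) \<times> real) set" and T :: real
  assume h: "compact K \<and> K \<subseteq> half_space \<and> T > 0"
  show "uniform_limit (K \<times> {0<..<T}) (\<lambda>eps (x, t). usol eps k \<delta> \<phi> \<psi> x t) (\<lambda>(x, t). \<phi> x) at_top"
    using h k_pos by (intro uniform_main[OF phi_cont phi_bdd psi_Linf delta_pos]) auto
  show "uniform_limit (K \<times> {0<..<T}) (\<lambda>eps (x, t). usol eps 0 \<delta> \<phi> \<psi> x t) (\<lambda>(x, t). \<phi> x) at_top"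
    using h by (intro uniform_main[OF phi_cont phi_bdd psi_Linf delta_pos]) auto
qed


end
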